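(* Let $\mathfrak F=(X,\parallel,Y,S_\vee)$ be a frame satisfying (F0)–(F4). The following are equivalent: (1) the incompatibility relation $\perp$ is symmetric; (2) $A\subseteq A^{**}$ for every $A\in\mathcal G(X)$; (3) $A^*=A^{\triangle}$ for every $A\in\mathcal G(X)$, where $A^\triangle=\{x\in X:\overline\eta_S(\Gamma x)\subseteq A'\}$.
   Context: Polarity $(X,\parallel,Y)$, ${\parallel}\subseteq X\times Y$, $I$ its complement. $U'=\{y:\forall x\in U\;x\parallel y\}$ for $U\subseteq X$, $V'=\{x:\forall y\in V\;x\parallel y\}$ for $V\subseteq Y$; stable sets $A=A''\subseteq X$ form $\mathcal G(X)$, co-stable sets $B=B''\subseteq Y$ form $\mathcal G(Y)$ (joins $(\bigcup A_j)''$). $x\preceq z$ iff $\{x\}'\subseteq\{z\}'$, similarly on $Y$; separated means these are partial orders; $\Gamma u$ is the up-set of $u$; closed elements are the sets $\Gamma u$. Frame $(X,\parallel,Y,S_\vee)$, $S_\vee\subseteq Y\times X$, $S_\vee x=\{y:yS_\vee x\}$, $yS_\vee=\{x:yS_\vee x\}$, $zS'_\vee x$ iff $\forall y(yS_\vee x\Rightarrow z\parallel y)$. Axioms (F0) $\forall x\exists y\,xIy$, $\forall y\exists x\,xIy$; (F1) separated; (F2) each $S_\vee x$ a closed element of $\mathcal G(Y)$; (F3) each $yS_\vee$ a down-set; (F4) for each $x$, $\{z:zS'_\vee x\}\in\mathcal G(X)$, for each $z$, $\{x:zS'_\vee x\}\in\mathcal G(X)$. $x\perp z$ iff $xS'_\vee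 z$; $A^*=\{x:\forall z\in A\;x\perp z\}$; $\overline\eta_S(A)=(\bigcup_{x\in A}S_\vee x)''$. *)

theory Defs
  imports Main
begin

text \<open>A polarity (X, par, Y) with explicit carriers X, Y; par x y means x \<parallel> y.
  S y x means y S_v x (S_v \<subseteq> Y \<times> X).\<close>

definition lpr :: "'b set \<Rightarrow> ('a \<Rightarrow> 'b \<Rightarrow> bool) \<Rightarrow> 'a set \<Rightarrow> 'b set" where
  "lpr Y par U = {y \<in> Y. \<forall>x\<in>U. par x y}"

definition rpr :: "'a set \<Rightarrow> ('a \<Rightarrow> 'b \<Rightarrow> bool) \<Rightarrow> 'b set \<Rightarrow> 'a set" where
  "rpr X par V = {x \<in> X. \<forall>y\<in>V. par x y}"

text \<open>Stable sets of X (elements of G(X)) and co-stable sets of Y (elements of G(Y)).\<close>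
definition stable :: "'a set \<Rightarrow> 'b set \<Rightarrow> ('a \<Rightarrow> 'b \<Rightarrow> bool) \<Rightarrow> 'a set \<Rightarrow> bool" where
  "stable X Y par A \<longleftrightarrow> A \<subseteq> X \<and> rpr X par (lpr Y par A) = A"

definition costable :: "'a set \<Rightarrow> 'b set \<Rightarrow> ('a \<Rightarrow> 'b \<Rightarrow> bool) \<Rightarrow> 'b set \<Rightarrow> bool" where
  "costable X Y par B \<longleftrightarrow> B \<subseteq> Y \<and> lpr Y par (rpr X par B) = B"

definition leX :: "'b set \<Rightarrow> ('a \<Rightarrow> 'b \<Rightarrow> bool) \<Rightarrow> 'a \<Rightarrow> 'a \<Rightarrow> bool" where
  "leX Y par x z \<longleftrightarrow> lpr Y par {x} \<subseteq> lpr Y par {z}"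

definition leY :: "'a set \<Rightarrow> ('a \<Rightarrow> 'b \<Rightarrow> bool) \<Rightarrow> 'b \<Rightarrow> 'b \<Rightarrow> bool" where
  "leY X par y v \<longleftrightarrow> rpr X par {y} \<subseteq> rpr X par {v}"

definition GammaX :: "'a set \<Rightarrow> 'b set \<Rightarrow> ('a \<Rightarrow> 'b \<Rightarrow> bool) \<Rightarrow> 'a \<Rightarrow> 'a set" where
  "GammaX X Y par x = {z \<in> X. leX Y par x z}"

definition GammaY :: "'a set \<Rightarrow> 'b set \<Rightarrow> ('a \<Rightarrow> 'b \<Rightarrow> bool) \<Rightarrow> 'b \<Rightarrow> 'b set" where
  "GammaY X Y par y = {v \<in> Y. leY X par y v}"

definition separated :: "'a set \<Rightarrow> 'b set \<Rightarrow> ('a \<Rightarrow> 'b \<Rightarrow> bool) \<Rightarrow> bool" where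
  "separated X Y par \<longleftrightarrow>
     (\<forall>x\<in>X. \<forall>z\<in>X. leX Y par x z \<and> leX Y par z x \<longrightarrow> x = z) \<and>
     (\<forall>y\<in>Y. \<forall>v\<in>Y. leY X par y v \<and> leY X par v y \<longrightarrow> y = v)"

definition Sx :: "'b set \<Rightarrow> ('b \<Rightarrow> 'a \<Rightarrow> bool) \<Rightarrow> 'a \<Rightarrow> 'b set" where
  "Sx Y S x = {y \<in> Y. S y x}"

definition Sy :: "'a set \<Rightarrow> ('b \<Rightarrow> 'a \<Rightarrow> bool) \<Rightarrow> 'b \<Rightarrow> 'a set" where
  "Sy X S y = {x \<in> X. S y x}"

definition Sprime :: "'b set \<Rightarrow> ('a \<Rightarrow> 'b \<Rightarrow> bool) \<Rightarrow> ('b \<Rightarrow> 'a \<Rightarrow> bool) \<Rightarrow> 'a \<Rightarrow> 'a \<Rightarrow> bool" where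
  "Sprime Y par S z x \<longleftrightarrow> (\<forall>y\<in>Y. S y x \<longrightarrow> par z y)"

definition frame :: "'a set \<Rightarrow> 'b set \<Rightarrow> ('a \<Rightarrow> 'b \<Rightarrow> bool) \<Rightarrow> ('b \<Rightarrow> 'a \<Rightarrow> bool) \<Rightarrow> bool" where
  "frame X Y par S \<longleftrightarrow>
     \<comment> \<open>S_v \<subseteq> Y \<times> X\<close>
     (\<forall>y x. S y x \<longrightarrow> y \<in> Y \<and> x \<in> X) \<and>
     \<comment> \<open>(F0)\<close>
     (\<forall>x\<in>X. \<exists>y\<in>Y. \<not> par x y) \<and> (\<forall>y\<in>Y. \<exists>x\<in>X. \<not> par x y) \<and>
     \<comment> \<open>(F1)\<close>
     separated X Y par \<and>
     \<comment> \<open>(F2): each S_v x is a closed element of G(Y)\<close>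
     (\<forall>x\<in>X. \<exists>y\<in>Y. Sx Y S x = GammaY X Y par y) \<and>
     \<comment> \<open>(F3): each y S_v is a down-set\<close>
     (\<forall>y\<in>Y. \<forall>x\<in>X. \<forall>z\<in>X. x \<in> Sy X S y \<and> leX Y par z x \<longrightarrow> z \<in> Sy X S y) \<and>
     \<comment> \<open>(F4)\<close>
     (\<forall>x\<in>X. stable X Y par {z \<in> X. Sprime Y par S z x}) \<and>
     (\<forall>z\<in>X. stable X Y par {x \<in> X. Sprime Y par S z x})"

definition perp :: "'b set \<Rightarrow> ('a \<Rightarrow> 'b \<Rightarrow> bool) \<Rightarrow> ('b \<Rightarrow> 'a \<Rightarrow> bool) \<Rightarrow> 'a \<Rightarrow> 'a \<Rightarrow> bool" where
  "perp Y par S x z \<longleftrightarrow> Sprime Y par S x z"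

definition star :: "'a set \<Rightarrow> 'b set \<Rightarrow> ('a \<Rightarrow> 'b \<Rightarrow> bool) \<Rightarrow> ('b \<Rightarrow> 'a \<Rightarrow> bool) \<Rightarrow> 'a set \<Rightarrow> 'a set" where
  "star X Y par S A = {x \<in> X. \<forall>z\<in>A. perp Y par S x z}"

definition etaS :: "'a set \<Rightarrow> 'b set \<Rightarrow> ('a \<Rightarrow> 'b \<Rightarrow> bool) \<Rightarrow> ('b \<Rightarrow> 'a \<Rightarrow> bool) \<Rightarrow> 'a set \<Rightarrow> 'b set" where
  "etaS X Y par S A = lpr Y par (rpr X par (\<Union>x\<in>A. Sx Y S x))"

definition tri :: "'a set \<Rightarrow> 'b set \<Rightarrow> ('a \<Rightarrow> 'b \<Rightarrow> bool) \<Rightarrow> ('b \<Rightarrow> 'a \<Rightarrow> bool) \<Rightarrow> 'a set \<Rightarrow> 'a set" where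
  "tri X Y par S A = {x \<in> X. etaS X Y par S (GammaX X Y par x) \<subseteq> lpr Y par A}"

end

theory Submission
  imports Defs
begin

lemma stable_up:
  assumes "stable X Y par A" "z \<in> A" "leX Y par z w" "w \<in> X"
  shows "w \<in> A"
proof -
  have "w \<in> rpr X par (lpr Y par A)"
    using assms unfolding rpr_def lpr_def leX_def by blast
  thus ?thesis using assms(1) unfolding stable_def by simp
qed

lemma stable_Gamma:
  assumes "z \<in> X"
  shows "stable X Y par (GammaX X Y par z)" and "z \<in> GammaX X Y par z"
proof -
  show "z \<in> GammaX X Y par z" using assms unfolding GammaX_def leX_def by simp
  have "rpr X par (lpr Y par (GammaX X Y par z)) = GammaX X Y par z"
  proof
    show "rpr X par (lpr Y par (GammaX X Y par z)) \<subseteq> GammaX X Y par z"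
    proof
      fix w assume w: "w \<in> rpr X par (lpr Y par (GammaX X Y par z))"
      have "lpr Y par {z} \<subseteq> lpr Y par {w}"
      proof
        fix y assume y: "y \<in> lpr Y par {z}"
        have "y \<in> lpr Y par (GammaX X Y par z)"
          using y unfolding lpr_def GammaX_def leX_def by blast
        thus "y \<in> lpr Y par {w}" using w y unfolding rpr_def lpr_def by auto
      qed
      thus "w \<in> GammaX X Y par z" using w unfolding GammaX_def leX_def rpr_def by auto
    qed
  next
    show "GammaX X Y par z \<subseteq> rpr X par (lpr Y par (GammaX X Y par z))"
      unfolding rpr_def lpr_def GammaX_def by auto
  qed
  thus "stable X Y par (GammaX X Y par z)" unfolding stable_def GammaX_def by auto
qed

lemma tri_char:
  assumes fr: "frame X Y par S" and st: "stable X Y par A" and x: "x \<in> X"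
  shows "x \<in> tri X Y par S A \<longleftrightarrow> (\<forall>a\<in>A. perp Y par S a x)"
proof -
  let ?B = "\<Union>w\<in>GammaX X Y par x. Sx Y S w"
  have AX: "A \<subseteq> X" using st unfolding stable_def by simp
  have BY: "?B \<subseteq> Y" unfolding Sx_def by auto
  have e1: "lpr Y par (rpr X par ?B) \<subseteq> lpr Y par A \<longleftrightarrow> ?B \<subseteq> lpr Y par A"
  proof
    assume h: "lpr Y par (rpr X par ?B) \<subseteq> lpr Y par A"
    have "?B \<subseteq> lpr Y par (rpr X par ?B)" using BY unfolding lpr_def rpr_def by auto
    thus "?B \<subseteq> lpr Y par A" using h by blast
  next
    assume h: "?B \<subseteq> lpr Y par A"
    have "rpr X par (lpr Y par A) \<subseteq> rpr X par ?B" using h unfolding rpr_def by blast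
    hence "lpr Y par (rpr X par ?B) \<subseteq> lpr Y par (rpr X par (lpr Y par A))"
      unfolding lpr_def by blast
    thus "lpr Y par (rpr X par ?B) \<subseteq> lpr Y par A" using st unfolding stable_def by simp
  qed
  have xG: "x \<in> GammaX X Y par x" using x unfolding GammaX_def leX_def by simp
  have F3: "\<forall>y\<in>Y. \<forall>x\<in>X. \<forall>z\<in>X. x \<in> Sy X S y \<and> leX Y par z x \<longrightarrow> z \<in> Sy X S y"
    using fr unfolding frame_def by blast
  have SYX: "\<forall>y x. S y x \<longrightarrow> y \<in> Y \<and> x \<in> X" using fr unfolding frame_def by blast
  have e2: "?B = Sx Y S x"
  proof
    show "?B \<subseteq> Sx Y S x"
    proof
      fix y assume "y \<in> ?B"
      then obtain w where w: "w \<in> GammaX X Y par x" "y \<in> Sx Y S w" by blast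
      have "x \<in> Sy X S y" using F3 w x unfolding GammaX_def Sx_def Sy_def by blast
      thus "y \<in> Sx Y S x" using w unfolding Sx_def Sy_def by auto
    qed
  next
    show "Sx Y S x \<subseteq> ?B" using xG by blast
  qed
  have e3: "Sx Y S x \<subseteq> lpr Y par A \<longleftrightarrow> (\<forall>a\<in>A. perp Y par S a x)"
    using AX SYX unfolding Sx_def lpr_def perp_def Sprime_def by blast
  show ?thesis using x e1 e2 e3 unfolding tri_def etaS_def by auto
qed

lemma perp_up:
  assumes fr: "frame X Y par S" and "x \<in> X" "z \<in> X" "perp Y par S x z"
    and "w \<in> GammaX X Y par z"
  shows "perp Y par S x w"
proof -
  have "stable X Y par {u \<in> X. Sprime Y par S x u}" using fr assms(2) unfolding frame_def by blast
  moreover have "z \<in> {u \<in> X. Sprime Y par S x u}" using assms unfolding perp_def by simp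
  ultimately have "w \<in> {u \<in> X. Sprime Y par S x u}"
    using stable_up assms(5) unfolding GammaX_def by fastforce
  thus ?thesis unfolding perp_def by simp
qed

theorem lemma3p16:
  fixes X :: "'a set" and Y :: "'b set"
    and par :: "'a \<Rightarrow> 'b \<Rightarrow> bool" and S :: "'b \<Rightarrow> 'a \<Rightarrow> bool"
  assumes "frame X Y par S"
  shows "((\<forall>x\<in>X. \<forall>z\<in>X. perp Y par S x z \<longrightarrow> perp Y par S z x)
            \<longleftrightarrow> (\<forall>A. stable X Y par A \<longrightarrow> A \<subseteq> star X Y par S (star X Y par S A)))
       \<and> ((\<forall>A. stable X Y par A \<longrightarrow> A \<subseteq> star X Y par S (star X Y par S A))
            \<longleftrightarrow> (\<forall>A. stable X Y par A \<longrightarrow> star X Y par S A = tri X Y par S A))"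
proof -
  let ?P1 = "\<forall>x\<in>X. \<forall>z\<in>X. perp Y par S x z \<longrightarrow> perp Y par S z x"
  let ?P2 = "\<forall>A. stable X Y par A \<longrightarrow> A \<subseteq> star X Y par S (star X Y par S A)"
  let ?P3 = "\<forall>A. stable X Y par A \<longrightarrow> star X Y par S A = tri X Y par S A"
  have GX: "\<And>z. GammaX X Y par z \<subseteq> X" unfolding GammaX_def by auto
  have a: "?P1 \<Longrightarrow> ?P2"
  proof (intro allI impI subsetI)
    fix A x assume p1: ?P1 and st: "stable X Y par A" and xA: "x \<in> A"
    have "A \<subseteq> X" using st unfolding stable_def by simp
    thus "x \<in> star X Y par S (star X Y par S A)" using p1 xA unfolding star_def by blast
  qed
  have b: "?P2 \<Longrightarrow> ?P1"
  proof (intro ballI impI)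
    fix x z assume p2: ?P2 and x: "x \<in> X" and z: "z \<in> X" and xz: "perp Y par S x z"
    have "x \<in> star X Y par S (GammaX X Y par z)"
      using perp_up[OF assms x z xz] x unfolding star_def by blast
    moreover have "z \<in> star X Y par S (star X Y par S (GammaX X Y par z))"
      using p2 stable_Gamma[OF z] by blast
    ultimately show "perp Y par S z x" unfolding star_def by blast
  qed
  have c: "?P1 \<Longrightarrow> ?P3"
  proof (intro allI impI)
    fix A assume p1: ?P1 and st: "stable X Y par A"
    have "A \<subseteq> X" using st unfolding stable_def by simp
    show "star X Y par S A = tri X Y par S A"
    proof (intro set_eqI iffI)
      fix x assume "x \<in> star X Y par S A"
      hence "x \<in> X" "\<forall>a\<in>A. perp Y par S x a" unfolding star_def by auto
      thus "x \<in> tri X Y par S A" using tri_char[OF assms st] p1 \<open>A \<subseteq> X\<close> by blast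
    next
      fix x assume h: "x \<in> tri X Y par S A"
      hence "x \<in> X" unfolding tri_def by auto
      thus "x \<in> star X Y par S A" using h tri_char[OF assms st] p1 \<open>A \<subseteq> X\<close>
        unfolding star_def by blast
    qed
  qed
  have d: "?P3 \<Longrightarrow> ?P1"
  proof (intro ballI impI)
    fix x z assume p3: ?P3 and x: "x \<in> X" and z: "z \<in> X" and xz: "perp Y par S x z"
    have "x \<in> star X Y par S (GammaX X Y par z)"
      using perp_up[OF assms x z xz] x unfolding star_def by blast
    hence "x \<in> tri X Y par S (GammaX X Y par z)" using p3 stable_Gamma[OF z] by blast
    thus "perp Y par S z x" using tri_char[OF assms stable_Gamma(1)[OF z] x] stable_Gamma(2)[OF z] by blast
  qed
  show ?thesis using a b c d by blast
qed

end
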